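(* Let $p$ be a prime, $q=p^n$, $d$ a natural number with $(d,p)=1$, $\psi$ a nontrivial additive character of $\mathbb{F}_p$, and $f\in\mathcal{F}_d$. Then $L_{\chi_f}(z)=(1-z)L_{f,\psi}(z)$. In particular the normalised nontrivial zeroes of $L_{\chi_f}$ coincide with the normalised zeroes of $L_{f,\psi}$.
   Context: $\mathcal{F}_d$ denotes the set of polynomials $f=\sum_{i=0}^d a_ix^i\in\mathbb{F}_q[x]$ with $a_d\neq 0$ and $a_i=0$ for every $i\ge 0$ divisible by $p$. $L_{f,\psi}(z)=\exp\left(\sum_{r\ge1}\sum_{\alpha\in\mathbb{F}_{q^r}}\psi(\mathrm{Tr}_{\mathbb{F}_{q^r}/\mathbb{F}_p}f(\alpha))z^r/r\right)$. For $f\in\mathcal{F}_d$, the Dirichlet character $\chi_f$ modulo $x^{d+1}$ is defined by: $\chi_f(g)=0$ if $x\mid g$; otherwise write $g(x)=g(0)\prod_{i=1}^k(1-\alpha_ix)$ with $\alpha_i$ in an algebraic closure of $\mathbb{F}_q$, and set $\chi_f(g)=\psi\left(\mathrm{Tr}_{\mathbb{F}_q/\mathbb{F}_p}\sum_{i=1}^kf(\alpha_i)\right)$. For a Dirichlet character $\chi$, $L_\chi(z)=\sum_{g}\chi(g)z^{\deg g}$, the sum over all monic $g\in\mathbb{F}_q[x]$; equivalently $\prod_h(1-\chi(h)z^{\deg h})^{-1}$ over monic irreducible $h$. *)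

theory Defs
  imports "HOL-Library.Cardinality" "HOL-Algebra.Algebraic_Closure_Type" "HOL-Computational_Algebra.Formal_Power_Series"
begin

text \<open>Finite fields F_{q^r} realised inside the algebraic closure of F_q = 'a.\<close>
definition ext_field :: "nat \<Rightarrow> 'a::{field,finite} alg_closure set" where
  "ext_field r = {x :: 'a alg_closure. x ^ (CARD('a) ^ r) = x}"

definition prime_field :: "nat \<Rightarrow> 'a::field alg_closure set" where
  "prime_field p = {x. x ^ p = x}"

definition abs_trace :: "nat \<Rightarrow> nat \<Rightarrow> 'b::comm_ring_1 \<Rightarrow> 'b" where
  "abs_trace p m y = (\<Sum>i<m. y ^ (p ^ i))"

text \<open>Nontrivial additive character of F_p (values only on F_p matter).\<close>
definition nontriv_add_char :: "nat \<Rightarrow> ('a::field alg_closure \<Rightarrow> complex) \<Rightarrow> bool" where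
  "nontriv_add_char p \<psi> \<longleftrightarrow>
     (\<forall>x\<in>prime_field p. \<psi> x \<noteq> 0) \<and>
     (\<forall>x\<in>prime_field p. \<forall>y\<in>prime_field p. \<psi> (x + y) = \<psi> x * \<psi> y) \<and>
     (\<exists>x\<in>prime_field p. \<psi> x \<noteq> 1)"

definition calF :: "nat \<Rightarrow> nat \<Rightarrow> 'a::field poly set" where
  "calF p d = {f. degree f = d \<and> coeff f d \<noteq> 0 \<and> (\<forall>i. p dvd i \<longrightarrow> coeff f i = 0)}"

definition char_sum :: "nat \<Rightarrow> nat \<Rightarrow> ('a::{field,finite} alg_closure \<Rightarrow> complex)
     \<Rightarrow> 'a poly \<Rightarrow> nat \<Rightarrow> complex" where
  "char_sum p n \<psi> f r =
     (\<Sum>\<alpha>\<in>ext_field r. \<psi> (abs_trace p (n * r) (poly (map_poly to_ac f) \<alpha>)))"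

definition L_f_psi :: "nat \<Rightarrow> nat \<Rightarrow> ('a::{field,finite} alg_closure \<Rightarrow> complex)
     \<Rightarrow> 'a poly \<Rightarrow> complex fps" where
  "L_f_psi p n \<psi> f =
     fps_exp 1 oo Abs_fps (\<lambda>r. if r = 0 then 0 else char_sum p n \<psi> f r / of_nat r)"

text \<open>chi_f(g): zero if x divides g; otherwise g(x) = g(0) prod (1 - alpha_i x),
  where the alpha_i are the inverses of the roots (with multiplicity) of g in the closure.\<close>
definition chi_f :: "nat \<Rightarrow> nat \<Rightarrow> ('a::{field,finite} alg_closure \<Rightarrow> complex)
     \<Rightarrow> 'a poly \<Rightarrow> 'a poly \<Rightarrow> complex" where
  "chi_f p n \<psi> f g =
     (if [:0, 1:] dvd g then 0
      else \<psi> (abs_trace p n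
              (\<Sum>\<beta>\<in>#proots (map_poly to_ac g). poly (map_poly to_ac f) (inverse \<beta>))))"

definition L_chi :: "('a::{field,finite} poly \<Rightarrow> complex) \<Rightarrow> complex fps" where
  "L_chi \<chi> = Abs_fps (\<lambda>N. \<Sum>g\<in>{g::'a poly. lead_coeff g = 1 \<and> degree g = N}. \<chi> g)"

end

theory Submission
  imports Defs
begin


lemma of_nat_eq_iff_mod_CHAR:
  "of_nat x = (of_nat y :: 'a::ring_1) \<longleftrightarrow> x mod CHAR('a) = y mod CHAR('a)"
proof (induction x y rule: linorder_wlog)
  case (le x y)
  define z where "z = y - x"
  have [simp]: "y = x + z"
    using le by (auto simp: z_def)
  have "(CHAR('a) dvd z) = (x mod CHAR('a) = (x + z) mod CHAR('a))"
    by (metis \<open>y = x + z\<close> le mod_eq_dvd_iff_nat z_def)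
  thus ?case
    by (simp add: of_nat_eq_0_iff_char_dvd)
qed metis

lemma CHAR_dvd_CARD': "CHAR('a::ring_1) dvd card (UNIV :: 'a set)"
proof (cases "card (UNIV :: 'a set) = 0")
  case False
  hence [intro]: "CHAR('a) > 0"
    by (simp add: card_eq_0_iff finite_imp_CHAR_pos)    
  define G where "G = \<lparr> carrier = (UNIV :: 'a set), monoid.mult = (+), one = (0 :: 'a) \<rparr>"
  define H where "H = (of_nat ` {..<CHAR('a)} :: 'a set)"
  interpret group G
  proof (rule groupI)
    fix x assume x: "x \<in> carrier G"
    show "\<exists>y\<in>carrier G. y \<otimes>\<^bsub>G\<^esub> x = \<one>\<^bsub>G\<^esub>"
      by (intro bexI[of _ "-x"]) (auto simp: G_def)
  qed (auto simp: G_def add_ac)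
  interpret subgroup H G
  proof
    show "\<one>\<^bsub>G\<^esub> \<in> H"
      using False unfolding G_def H_def by force
  next
    fix x y :: 'a
    assume "x \<in> H" "y \<in> H"
    then obtain x' y' where [simp]: "x = of_nat x'" "y = of_nat y'"
      by (auto simp: H_def)
    have "x + y = of_nat ((x' + y') mod CHAR('a))"
      by (auto simp flip: of_nat_add simp: of_nat_eq_iff_mod_CHAR)
    moreover have "(x' + y') mod CHAR('a) < CHAR('a)"
      using H_def \<open>y \<in> H\<close> by fastforce
    ultimately show "x \<otimes>\<^bsub>G\<^esub> y \<in> H"
      by (auto simp: H_def G_def intro!: imageI)
  next
    fix x :: 'a
    assume x: "x \<in> H"
    then obtain x' where [simp]: "x = of_nat x'" and x': "x' < CHAR('a)"
      by (auto simp: H_def)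
    have "CHAR('a) dvd x' + (CHAR('a) - x') mod CHAR('a)"
      using mod_eq_0_iff_dvd mod_if x' by fastforce
    hence "x + of_nat ((CHAR('a) - x') mod CHAR('a)) = 0"
      by (auto simp flip: of_nat_add simp: of_nat_eq_0_iff_char_dvd)
    moreover from this have "inv\<^bsub>G\<^esub> x = of_nat ((CHAR('a) - x') mod CHAR('a))"
      by (intro inv_equality) (auto simp: G_def add_ac)
    moreover have "of_nat ((CHAR('a) - x') mod CHAR('a)) \<in> H"
      unfolding H_def using \<open>CHAR('a) > 0\<close> by (intro imageI) auto
    ultimately show "inv\<^bsub>G\<^esub> x \<in> H" by force
  qed (auto simp: G_def H_def)
  have "card H dvd card (rcosets\<^bsub>G\<^esub> H) * card H"
    by simp
  also have "card (rcosets\<^bsub>G\<^esub> H) * card H = Coset.order G"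
  proof (rule lagrange_finite)
    show "finite (carrier G)"
      using False card_ge_0_finite by (auto simp: G_def)
  qed (fact is_subgroup)
  finally have "card H dvd card (UNIV :: 'a set)"
    by (simp add: Coset.order_def G_def)
  also have "card H = card {..<CHAR('a)}"
    unfolding H_def by (intro card_image inj_onI) (auto simp: of_nat_eq_iff_mod_CHAR)
  finally show "CHAR('a) dvd card (UNIV :: 'a set)"
    by simp
qed auto

lemma finite_field_pow_card:
  fixes x :: "'a :: {field,finite}"
  shows   "x ^ card (UNIV :: 'a set) = x"
proof (cases "x = 0")
  case False
  have "x * (\<Prod>y\<in>UNIV-{0}. x * y) = x * x ^ (card (UNIV :: 'a set) - 1) * \<Prod>(UNIV-{0})"
    by (simp add: prod.distrib mult_ac)
  also have "x * x ^ (card (UNIV :: 'a set) - 1) = x ^ Suc (card (UNIV :: 'a set) - 1)"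
    by (subst power_Suc) auto
  also have "Suc (card (UNIV :: 'a set) - 1) = card (UNIV :: 'a set)"
    using finite_UNIV_card_ge_0[where ?'a = 'a] by simp
  also have "(\<Prod>y\<in>UNIV-{0}. x * y) = (\<Prod>y\<in>UNIV-{0}. y)"
    by (rule prod.reindex_bij_witness[of _ "\<lambda>y. y / x" "\<lambda>y. x * y"]) (use False in auto)
  finally show ?thesis
    by simp
qed (use finite_UNIV_card_ge_0[where ?'a = 'a] in auto)

lemma CHAR_finite_field:
  assumes "prime p" "CARD('a::{field,finite}) = p ^ n"
  shows "CHAR('a) = p"
proof -
  have "CHAR('a) > 0" by (simp add: finite_imp_CHAR_pos)
  hence pc: "prime CHAR('a)" using prime_CHAR_semidom by blast
  have "CHAR('a) dvd p ^ n" using CHAR_dvd_CARD'[where 'a='a] assms by simp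
  hence "CHAR('a) dvd p" using pc prime_dvd_power by blast
  thus ?thesis using pc assms(1) by (simp add: primes_dvd_imp_eq)
qed


lemma proots_lin_prod: "proots (\<Prod>x\<in>#A. [:-x, 1:]) = (A :: 'a::idom multiset)"
proof (induction A)
  case (add x A)
  have "(\<Prod>y\<in>#A. [:-y, 1:]) \<noteq> (0::'a poly)" by (auto simp: prod_mset_zero_iff)
  hence "proots ([:-x, 1:] * (\<Prod>y\<in>#A. [:-y, 1:])) = proots [:-x, 1:] + proots (\<Prod>y\<in>#A. [:-y, 1:])"
    by (intro proots_mult) auto
  then show ?case using add by simp
qed simp

lemma map_poly_mult_hom:
  assumes h0: "h 0 = 0" and hadd: "\<And>a b. h (a + b) = h a + h b" and hmult: "\<And>a b. h (a * b) = h a * h b"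
  shows "map_poly h (P * Q) = map_poly h P * map_poly (h :: 'a::comm_semiring_1 \<Rightarrow> 'b::comm_semiring_1) Q"
proof -
  have hsum: "h (sum g A) = sum (\<lambda>i. h (g i)) A" for g :: "nat \<Rightarrow> 'a" and A
    by (induction A rule: infinite_finite_induct) (auto simp: h0 hadd)
  show ?thesis
    by (intro poly_eqI) (simp add: coeff_map_poly coeff_mult hsum hmult h0)
qed

locale L11 =
  fixes p n :: nat and \<psi> :: "'a::{field,finite} alg_closure \<Rightarrow> complex" and f :: "'a poly"
  assumes prime_p: "prime p" and card_a: "CARD('a) = p ^ n"
    and psi: "nontriv_add_char p \<psi>" and f0: "coeff f 0 = 0"
begin


lemma charA: "CHAR('a) = p"
  using CHAR_finite_field[OF prime_p card_a] by simp

lemma charK: "CHAR('a alg_closure) = p"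
  using charA by simp

lemma q_ge2: "CARD('a) \<ge> 2"
proof -
  have "{0::'a, 1} \<subseteq> UNIV" by simp
  hence "card {0::'a,1} \<le> CARD('a)" by (intro card_mono) auto
  thus ?thesis by simp
qed

lemma n_pos: "n > 0"
  using q_ge2 card_a by (cases n) auto

lemma p_pos: "p > 0" using prime_p prime_gt_0_nat by blast

lemma q_pow: "CARD('a) ^ r = CHAR('a alg_closure) ^ (n * r)"
  by (simp add: charA card_a power_mult)

lemma frob_add: "((x::'a alg_closure) + y) ^ (CARD('a) ^ r) = x ^ (CARD('a) ^ r) + y ^ (CARD('a) ^ r)"
  by (rule freshmans_dream') (auto simp: charA prime_p q_pow)

lemma frob_sum: "(sum (g :: _ \<Rightarrow> 'a alg_closure) A) ^ (CARD('a) ^ r) = sum (\<lambda>i. g i ^ (CARD('a) ^ r)) A"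
  by (rule freshmans_dream_sum') (auto simp: charA prime_p q_pow)

lemma pfrob_add: "((x::'a alg_closure) + y) ^ (p ^ i) = x ^ (p ^ i) + y ^ (p ^ i)"
  by (rule freshmans_dream') (auto simp: charA prime_p)

lemma pfrob_sum: "(sum (g :: _ \<Rightarrow> 'a alg_closure) A) ^ (p ^ i) = sum (\<lambda>j. g j ^ (p ^ i)) A"
  by (rule freshmans_dream_sum') (auto simp: charA prime_p)

lemma frob_diff: "((x::'a alg_closure) - y) ^ (CARD('a) ^ r) = x ^ (CARD('a) ^ r) - y ^ (CARD('a) ^ r)"
  using frob_add[of "x - y" y r] by (simp add: algebra_simps)

lemma frob_inj: "(x::'a alg_closure) ^ (CARD('a) ^ r) = y ^ (CARD('a) ^ r) \<Longrightarrow> x = y"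
  using frob_diff[of x y r] by simp

lemma frob_sum_mset: "(sum_mset (image_mset (g :: _ \<Rightarrow> 'a alg_closure) M)) ^ (CARD('a) ^ r)
    = sum_mset (image_mset (\<lambda>i. g i ^ (CARD('a) ^ r)) M)"
  by (induction M) (auto simp: frob_add q_ge2)

lemma to_ac_fixed: "(to_ac a) ^ (CARD('a) ^ r) = to_ac (a :: 'a)"
proof (induction r)
  case (Suc r)
  have "to_ac a ^ (CARD('a) ^ Suc r) = (to_ac a ^ (CARD('a) ^ r)) ^ CARD('a)" by (metis power_Suc2 power_mult)
  also have "\<dots> = to_ac (a ^ CARD('a))" using Suc by simp
  finally show ?case by (simp add: finite_field_pow_card)
qed simp

lemma fixed_field: 
  assumes "(c :: 'a alg_closure) ^ CARD('a) = c" shows "c \<in> range to_ac"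
proof -
  define P :: "'a alg_closure poly" where "P = monom 1 CARD('a) + [:0,-1:]"
  have degP: "degree P = CARD('a)" using q_ge2 unfolding P_def by (subst degree_add_eq_left) (auto simp: degree_monom_eq)
  hence P0: "P \<noteq> 0" using q_ge2 by auto
  let ?S = "{x. poly P x = 0}"
  have S: "?S = {x. x ^ CARD('a) = x}" by (auto simp: P_def poly_monom)
  have fin: "finite ?S" using poly_roots_finite[OF P0] .
  have sub: "range to_ac \<subseteq> ?S" unfolding S using to_ac_fixed[of _ 1] by auto
  have "card (range (to_ac :: 'a \<Rightarrow> _)) = CARD('a)" by (simp add: card_image inj_to_ac)
  moreover have "card ?S \<le> CARD('a)" using card_poly_roots_bound[OF P0] degP by simp
  ultimately have "range to_ac = ?S" using card_subset_eq[OF fin sub] card_mono[OF fin sub] by simp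
  thus ?thesis using assms S by auto
qed


lemma frob_add1: "((x::'a alg_closure) + y) ^ CARD('a) = x ^ CARD('a) + y ^ CARD('a)"
  using frob_add[of x y 1] by simp

lemma psi_hom: "x \<in> prime_field p \<Longrightarrow> y \<in> prime_field p \<Longrightarrow> \<psi> (x + y) = \<psi> x * \<psi> y"
  using psi unfolding nontriv_add_char_def by blast

lemma zero_pf: "0 \<in> prime_field p" using p_pos by (simp add: prime_field_def)

lemma psi0: "\<psi> 0 = 1"
proof -
  have "\<psi> 0 = \<psi> 0 * \<psi> 0" using psi_hom[OF zero_pf zero_pf] by simp
  moreover have "\<psi> 0 \<noteq> 0" using psi zero_pf unfolding nontriv_add_char_def by blast
  ultimately show ?thesis by (metis mult_cancel_left1)
qed

lemma tr_add: "abs_trace p n (a + b) = abs_trace p n a + abs_trace p n (b :: 'a alg_closure)"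
  by (simp add: abs_trace_def pfrob_add sum.distrib)

lemma tr_0: "abs_trace p n (0 :: 'a alg_closure) = 0"
  using p_pos by (auto simp: abs_trace_def power_0_left intro!: sum.neutral)

lemma tr_pf:
  assumes "(y :: 'a alg_closure) ^ CARD('a) = y"
  shows "abs_trace p n y \<in> prime_field p"
proof -
  define g where "g = (\<lambda>i. y ^ (p ^ i))"
  have "(abs_trace p n y) ^ p = (\<Sum>i<n. g (Suc i))"
    using pfrob_sum[of "\<lambda>i. y ^ (p ^ i)" "{..<n}" 1]
    by (simp add: abs_trace_def g_def power_mult[symmetric] mult.commute)
  also have "\<dots> = (\<Sum>i<n. g i) + g n - g 0"
    using sum.lessThan_Suc_shift[of g n] sum.lessThan_Suc[of g n] by (simp add: algebra_simps)
  also have "g n = g 0" using assms card_a by (simp add: g_def)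
  finally show ?thesis by (simp add: prime_field_def abs_trace_def g_def)
qed

lemma psi_tr_add:
  assumes "a ^ CARD('a) = a" "b ^ CARD('a) = b"
  shows "\<psi> (abs_trace p n (a + b)) = \<psi> (abs_trace p n a) * \<psi> (abs_trace p n b)"
  using psi_hom[OF tr_pf[OF assms(1)] tr_pf[OF assms(2)]] by (simp add: tr_add)

definition FF :: "'a alg_closure \<Rightarrow> 'a alg_closure" where
  "FF \<beta> = poly (map_poly to_ac f) (inverse \<beta>)"

lemma poly_frob:
  "(poly (map_poly to_ac (g :: 'a poly)) x) ^ (CARD('a) ^ r) = poly (map_poly to_ac g) (x ^ (CARD('a) ^ r))"
proof -
  have "(poly (map_poly to_ac g) x) ^ (CARD('a) ^ r)
      = (\<Sum>i\<le>degree (map_poly to_ac g). (coeff (map_poly to_ac g) i * x ^ i) ^ (CARD('a) ^ r))"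
    unfolding poly_altdef by (rule frob_sum)
  also have "\<dots> = (\<Sum>i\<le>degree (map_poly to_ac g). coeff (map_poly to_ac g) i * (x ^ (CARD('a) ^ r)) ^ i)"
    by (intro sum.cong refl) (simp add: power_mult_distrib coeff_map_poly to_ac_fixed
          flip: power_mult, simp add: mult.commute)
  finally show ?thesis by (simp add: poly_altdef)
qed

lemma FF_frob: "(FF \<beta>) ^ (CARD('a) ^ r) = FF (\<beta> ^ (CARD('a) ^ r))"
  by (simp add: FF_def poly_frob power_inverse)

lemma FF_frob1: "(FF \<beta>) ^ CARD('a) = FF (\<beta> ^ CARD('a))"
  using FF_frob[of \<beta> 1] by simp

definition stable :: "'a alg_closure multiset \<Rightarrow> bool" where
  "stable M \<longleftrightarrow> image_mset (\<lambda>x. x ^ CARD('a)) M = M"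

definition ww :: "'a alg_closure multiset \<Rightarrow> complex" where
  "ww M = \<psi> (abs_trace p n (\<Sum>\<beta>\<in>#M. FF \<beta>))"

lemma stable_sum_fixed:
  assumes "stable M" shows "(\<Sum>\<beta>\<in>#M. FF \<beta>) ^ CARD('a) = (\<Sum>\<beta>\<in>#M. FF \<beta>)"
proof -
  have "(\<Sum>\<beta>\<in>#M. FF \<beta>) ^ CARD('a) = (\<Sum>\<beta>\<in>#M. FF (\<beta> ^ CARD('a)))"
    using frob_sum_mset[of FF M 1] by (simp add: FF_frob1)
  also have "\<dots> = (\<Sum>\<beta>\<in>#image_mset (\<lambda>x. x ^ CARD('a)) M. FF \<beta>)"
    by (simp add: image_mset.compositionality o_def)
  finally show ?thesis using assms by (simp add: stable_def)
qed

lemma ww_add: "stable A \<Longrightarrow> stable B \<Longrightarrow> ww (A + B) = ww A * ww B"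
  unfolding ww_def by (simp add: psi_tr_add stable_sum_fixed)

lemma ww_empty: "ww {#} = 1"
  by (simp add: ww_def tr_0 psi0)


end


context L11 begin

lemma pow_q_add: "(x::'a alg_closure) ^ (CARD('a) ^ (a + b)) = (x ^ (CARD('a) ^ a)) ^ (CARD('a) ^ b)"
  by (simp add: power_add power_mult)

lemma count_inj_image: "inj h \<Longrightarrow> count (image_mset h M) (h x) = count M x"
proof -
  assume "inj h"
  hence "h -` {h x} \<inter> set_mset M = {x} \<inter> set_mset M" by (auto dest: injD)
  thus ?thesis by (cases "x \<in># M") (auto simp: count_image_mset)
qed

lemma inj_frob: "inj (\<lambda>x::'a alg_closure. x ^ CARD('a))"
  by (intro injI) (rule frob_inj[of _ 1], simp)

lemma stable_count: assumes "stable M" shows "count M (x ^ (CARD('a) ^ j)) = count M x"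
proof (induction j)
  case (Suc j)
  have "count M (x ^ (CARD('a) ^ Suc j)) = count M ((x ^ (CARD('a) ^ j)) ^ CARD('a))"
    using pow_q_add[of x j 1] by simp
  also have "\<dots> = count (image_mset (\<lambda>x. x ^ CARD('a)) M) ((x ^ (CARD('a) ^ j)) ^ CARD('a))"
    using assms by (simp add: stable_def)
  also have "\<dots> = count M (x ^ (CARD('a) ^ j))"
    by (rule count_inj_image[OF inj_frob])
  finally show ?case using Suc by simp
qed simp

definition TT :: "nat \<Rightarrow> 'a alg_closure \<Rightarrow> 'a alg_closure multiset" where
  "TT r \<beta> = mset (map (\<lambda>j. \<beta> ^ (CARD('a) ^ j)) [0..<r])"

lemma size_TT [simp]: "size (TT r \<beta>) = r"
  by (simp add: TT_def)

lemma TT_add: "TT (a + b) \<beta> = TT a \<beta> + TT b (\<beta> ^ (CARD('a) ^ a))"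
proof -
  have "[0..<a + b] = [0..<a] @ map (\<lambda>i. i + a) [0..<b]"
    using upt_add_eq_append[of 0 a b] map_add_upt[of a b] by (simp only: add.commute[of b a] le0)
  moreover have "(\<lambda>j. \<beta> ^ (CARD('a) ^ j)) \<circ> (\<lambda>i. i + a) = (\<lambda>j. (\<beta> ^ (CARD('a) ^ a)) ^ (CARD('a) ^ j))"
    by (rule ext) (simp only: comp_apply add.commute[of _ a] pow_q_add)
  ultimately show ?thesis unfolding TT_def by (simp only: map_append mset_append map_map)
qed

lemma TT_1 [simp]: "TT 1 \<beta> = {#\<beta>#}" by (simp add: TT_def)

lemma TT_0 [simp]: "TT 0 \<beta> = {#}" by (simp add: TT_def)

lemma stable_TT:
  assumes "\<beta> ^ (CARD('a) ^ r) = \<beta>" shows "stable (TT r \<beta>)"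
proof -
  have "TT (1 + r) \<beta> = TT (r + 1) \<beta>" by (simp only: add.commute[of 1 r])
  hence "{#\<beta>#} + TT r (\<beta> ^ CARD('a)) = TT r \<beta> + {#\<beta>#}"
    using assms by (simp only: TT_add TT_1 power_one_right)
  hence e: "TT r (\<beta> ^ CARD('a)) = TT r \<beta>" by (simp add: add.commute)
  have "(\<lambda>x. x ^ CARD('a)) \<circ> (\<lambda>j. \<beta> ^ (CARD('a) ^ j)) = (\<lambda>j. (\<beta> ^ CARD('a)) ^ (CARD('a) ^ j))"
    by (rule ext) (simp only: comp_apply power_mult[symmetric] mult.commute)
  note eqh = this
  have "image_mset (\<lambda>x. x ^ CARD('a)) (TT r \<beta>) = TT r (\<beta> ^ CARD('a))"
    unfolding TT_def mset_map image_mset.compositionality eqh ..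
  thus ?thesis using e by (simp add: stable_def)
qed

end


context L11 begin

lemma sum_TT: "(\<Sum>\<gamma>\<in>#TT r \<beta>. FF \<gamma>) = (\<Sum>j<r. (FF \<beta>) ^ (CARD('a) ^ j))"
proof -
  have "(\<Sum>\<gamma>\<in>#TT r \<beta>. FF \<gamma>) = sum_list (map (FF \<circ> (\<lambda>j. \<beta> ^ (CARD('a) ^ j))) [0..<r])"
    unfolding TT_def by (simp only: mset_map[symmetric] sum_mset_sum_list map_map)
  also have "\<dots> = (\<Sum>j<r. FF (\<beta> ^ (CARD('a) ^ j)))"
    by (simp only: sum_set_upt_conv_sum_list_nat[symmetric] set_upt atLeast0LessThan o_def)
  finally show ?thesis by (simp add: FF_frob)
qed

lemma exp_eq: "CARD('a) ^ j * p ^ i = p ^ (i + j * n)"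
proof -
  have "CARD('a) ^ j = p ^ (n * j)" by (simp add: card_a power_mult)
  thus ?thesis by (simp add: power_add mult.commute)
qed

lemma trace_tower: "abs_trace p n (\<Sum>j<r. (y::'a alg_closure) ^ (CARD('a) ^ j)) = abs_trace p (n * r) y"
proof -
  have "abs_trace p n (\<Sum>j<r. y ^ (CARD('a) ^ j)) = (\<Sum>i<n. \<Sum>j<r. y ^ (p ^ (i + j * n)))"
    unfolding abs_trace_def
  proof (rule sum.cong[OF refl])
    fix i assume "i \<in> {..<n}"
    have "(\<Sum>j<r. y ^ (CARD('a) ^ j)) ^ p ^ i = (\<Sum>j<r. (y ^ (CARD('a) ^ j)) ^ p ^ i)"
      by (rule pfrob_sum)
    also have "\<dots> = (\<Sum>j<r. y ^ (p ^ (i + j * n)))"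
      by (intro sum.cong refl) (simp only: power_mult[symmetric] exp_eq)
    finally show "(\<Sum>j<r. y ^ (CARD('a) ^ j)) ^ p ^ i = (\<Sum>j<r. y ^ (p ^ (i + j * n)))" .
  qed
  also have "\<dots> = (\<Sum>j<r. \<Sum>i<n. y ^ (p ^ (i + j * n)))" by (rule sum.swap)
  also have "\<dots> = (\<Sum>j<r. sum (\<lambda>k. y ^ (p ^ k)) {j * n..<j * n + n})"
  proof (rule sum.cong[OF refl])
    fix j assume "j \<in> {..<r}"
    have "sum (\<lambda>k. y ^ (p ^ k)) {0 + j * n..<n + j * n} = (\<Sum>i = 0..<n. y ^ (p ^ (i + j * n)))"
      by (rule sum.shift_bounds_nat_ivl)
    thus "(\<Sum>i<n. y ^ (p ^ (i + j * n))) = sum (\<lambda>k. y ^ (p ^ k)) {j * n..<j * n + n}"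
      by (simp only: atLeast0LessThan add.commute[of n] add_0)
  qed
  also have "\<dots> = abs_trace p (n * r) y"
    unfolding abs_trace_def by (subst sum.nat_group) (simp only: mult.commute[of r n])
  finally show ?thesis .
qed

lemma ww_TT: "ww (TT r \<beta>) = \<psi> (abs_trace p (n * r) (FF \<beta>))"
  unfolding ww_def sum_TT trace_tower ..

lemma stable_mem: "stable M \<Longrightarrow> \<beta> \<in># M \<Longrightarrow> \<beta> ^ (CARD('a) ^ j) \<in># M"
  using stable_count[of M \<beta> j] by (metis count_eq_zero_iff)

lemma frob_shift:
  assumes "i \<le> j" "(\<beta>::'a alg_closure) ^ (CARD('a) ^ i) = \<beta> ^ (CARD('a) ^ j)"
  shows "\<beta> ^ (CARD('a) ^ (j - i)) = \<beta>"
proof -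
  have "(\<beta> ^ (CARD('a) ^ (j - i))) ^ (CARD('a) ^ i) = \<beta> ^ (CARD('a) ^ (j - i + i))"
    by (simp only: pow_q_add)
  also have "j - i + i = j" using assms(1) by simp
  finally have "(\<beta> ^ (CARD('a) ^ (j - i))) ^ (CARD('a) ^ i) = \<beta> ^ (CARD('a) ^ i)"
    using assms(2) by simp
  thus ?thesis by (rule frob_inj)
qed

lemma period_exists:
  assumes "stable M" "\<beta> \<in># M" shows "\<exists>m>0. \<beta> ^ (CARD('a) ^ m) = \<beta>"
proof -
  define h where "h = (\<lambda>j. \<beta> ^ (CARD('a) ^ j))"
  define S where "S = set_mset M"
  have fin: "finite S" by (simp add: S_def)
  have sub: "h ` {..card S} \<subseteq> S" using stable_mem[OF assms] by (auto simp: h_def S_def)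
  have "\<not> inj_on h {..card S}"
  proof
    assume "inj_on h {..card S}"
    hence "card {..card S} \<le> card S" using card_inj_on_le[OF _ sub fin] by blast
    thus False by simp
  qed
  then obtain i j where ij: "i \<noteq> j" "h i = h j" unfolding inj_on_def by blast
  show ?thesis
  proof (cases "i < j")
    case True thus ?thesis using frob_shift[of i j \<beta>] ij by (intro exI[of _ "j - i"]) (auto simp: h_def)
  next
    case False thus ?thesis using frob_shift[of j i \<beta>] ij by (intro exI[of _ "i - j"]) (auto simp: h_def)
  qed
qed

definition per :: "'a alg_closure \<Rightarrow> nat" where
  "per \<beta> = (LEAST m. m > 0 \<and> \<beta> ^ (CARD('a) ^ m) = \<beta>)"

lemma per:
  assumes "\<exists>m>0. \<beta> ^ (CARD('a) ^ m) = \<beta>"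
  shows "per \<beta> > 0" "\<beta> ^ (CARD('a) ^ per \<beta>) = \<beta>"
    "\<And>k. 0 < k \<Longrightarrow> k < per \<beta> \<Longrightarrow> \<beta> ^ (CARD('a) ^ k) \<noteq> \<beta>"
proof -
  have "per \<beta> > 0 \<and> \<beta> ^ (CARD('a) ^ per \<beta>) = \<beta>"
    unfolding per_def using assms by (metis (mono_tags, lifting) LeastI)
  thus "per \<beta> > 0" "\<beta> ^ (CARD('a) ^ per \<beta>) = \<beta>" by auto
  show "\<And>k. 0 < k \<Longrightarrow> k < per \<beta> \<Longrightarrow> \<beta> ^ (CARD('a) ^ k) \<noteq> \<beta>"
    unfolding per_def using not_less_Least by blast
qed

lemma pow_mult_per: "(\<beta>::'a alg_closure) ^ (CARD('a) ^ m) = \<beta> \<Longrightarrow> \<beta> ^ (CARD('a) ^ (m * k)) = \<beta>"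
proof (induction k)
  case (Suc k)
  have "\<beta> ^ (CARD('a) ^ (m * Suc k)) = (\<beta> ^ (CARD('a) ^ (m * k))) ^ (CARD('a) ^ m)"
    by (simp only: mult_Suc_right add.commute[of m] pow_q_add)
  thus ?case using Suc by simp
qed simp

lemma per_dvd:
  assumes "\<exists>m>0. \<beta> ^ (CARD('a) ^ m) = \<beta>"
  shows "\<beta> ^ (CARD('a) ^ r) = \<beta> \<longleftrightarrow> per \<beta> dvd r"
proof
  assume "per \<beta> dvd r"
  then obtain k where "r = per \<beta> * k" by blast
  thus "\<beta> ^ (CARD('a) ^ r) = \<beta>" using pow_mult_per per(2)[OF assms] by simp
next
  assume r: "\<beta> ^ (CARD('a) ^ r) = \<beta>"
  have "\<beta> ^ (CARD('a) ^ r) = \<beta> ^ (CARD('a) ^ (per \<beta> * (r div per \<beta>) + r mod per \<beta>))"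
    by (simp only: mult_div_mod_eq)
  hence "\<beta> ^ (CARD('a) ^ r) = (\<beta> ^ (CARD('a) ^ (per \<beta> * (r div per \<beta>)))) ^ (CARD('a) ^ (r mod per \<beta>))"
    by (simp only: pow_q_add)
  hence "\<beta> ^ (CARD('a) ^ (r mod per \<beta>)) = \<beta>" using r pow_mult_per[OF per(2)[OF assms]] by simp
  moreover have "r mod per \<beta> < per \<beta>" using per(1)[OF assms] by simp
  ultimately have "r mod per \<beta> = 0" using per(3)[OF assms] by blast
  thus "per \<beta> dvd r" by (simp add: dvd_eq_mod_eq_0)
qed

lemma TT_mult: "\<beta> ^ (CARD('a) ^ m) = \<beta> \<Longrightarrow> TT (m * k) \<beta> = repeat_mset k (TT m \<beta>)"
proof (induction k)
  case (Suc k)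
  have "TT (m * Suc k) \<beta> = TT m \<beta> + TT (m * k) (\<beta> ^ (CARD('a) ^ m))"
    by (simp only: mult_Suc_right TT_add)
  thus ?case using Suc by simp
qed simp

lemma count_TT_per:
  assumes "\<exists>m>0. \<beta> ^ (CARD('a) ^ m) = \<beta>"
  shows "count (TT (per \<beta>) \<beta>) \<gamma> = (if \<gamma> \<in># TT (per \<beta>) \<beta> then 1 else 0)"
proof -
  have "inj_on (\<lambda>j. \<beta> ^ (CARD('a) ^ j)) {0..<per \<beta>}"
  proof (rule inj_onI)
    fix i j assume ij: "i \<in> {0..<per \<beta>}" "j \<in> {0..<per \<beta>}" "\<beta> ^ (CARD('a) ^ i) = \<beta> ^ (CARD('a) ^ j)"
    show "i = j"
    proof (rule ccontr)
      assume "i \<noteq> j"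
      then consider "i < j" | "j < i" by linarith
      thus False
      proof cases
        case 1 thus False using frob_shift[of i j \<beta>] ij per(3)[OF assms, of "j - i"] by (auto simp: less_imp_diff_less)
      next
        case 2 thus False using frob_shift[of j i \<beta>] ij per(3)[OF assms, of "i - j"] by (auto simp: less_imp_diff_less)
      qed
    qed
  qed
  hence "distinct (map (\<lambda>j. \<beta> ^ (CARD('a) ^ j)) [0..<per \<beta>])" by (simp add: distinct_map)
  thus ?thesis unfolding TT_def distinct_count_atmost_1 by (simp only: set_mset_mset)
qed

lemma beta_in_TT: "r > 0 \<Longrightarrow> \<beta> \<in># TT r \<beta>"
  by (auto simp: TT_def intro!: image_eqI[of _ _ 0])

lemma orbit_count:
  assumes "stable M" "\<beta> \<in># M"
  shows "{r. 0 < r \<and> \<beta> ^ (CARD('a) ^ r) = \<beta> \<and> TT r \<beta> \<subseteq># M}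
         = (\<lambda>k. per \<beta> * k) ` {1..count M \<beta>}"
proof -
  have ex: "\<exists>m>0. \<beta> ^ (CARD('a) ^ m) = \<beta>" by (rule period_exists[OF assms])
  note P = per[OF ex]
  have cT: "count (TT (per \<beta> * k) \<beta>) \<gamma> = k * (if \<gamma> \<in># TT (per \<beta>) \<beta> then 1 else 0)" for k \<gamma>
    using TT_mult[OF P(2), of k] count_TT_per[OF ex, of \<gamma>] by simp
  have cM: "count M \<gamma> = count M \<beta>" if "\<gamma> \<in># TT (per \<beta>) \<beta>" for \<gamma>
    using that stable_count[OF assms(1)] by (auto simp: TT_def)
  show ?thesis
  proof (intro equalityI subsetI)
    fix r assume "r \<in> {r. 0 < r \<and> \<beta> ^ (CARD('a) ^ r) = \<beta> \<and> TT r \<beta> \<subseteq># M}"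
    hence r: "0 < r" "\<beta> ^ (CARD('a) ^ r) = \<beta>" "TT r \<beta> \<subseteq># M" by auto
    then obtain k where k: "r = per \<beta> * k" using per_dvd[OF ex] by blast
    have "count (TT r \<beta>) \<beta> \<le> count M \<beta>" using r(3) by (rule mset_subset_eq_count)
    hence "k \<le> count M \<beta>" using cT[of k \<beta>] beta_in_TT[OF P(1)] k by simp
    moreover have "k > 0" using k r(1) by (cases k) auto
    ultimately show "r \<in> (\<lambda>k. per \<beta> * k) ` {1..count M \<beta>}" using k by auto
  next
    fix r assume "r \<in> (\<lambda>k. per \<beta> * k) ` {1..count M \<beta>}"
    then obtain k where k0: "k \<in> {1..count M \<beta>}" "r = per \<beta> * k" by blast
    hence k: "r = per \<beta> * k" "1 \<le> k" "k \<le> count M \<beta>" by auto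
    have "0 < r" using k P(1) by simp
    moreover have "\<beta> ^ (CARD('a) ^ r) = \<beta>" using k pow_mult_per[OF P(2)] by simp
    moreover have "TT r \<beta> \<subseteq># M"
      unfolding subseteq_mset_def
    proof
      fix \<gamma> show "count (TT r \<beta>) \<gamma> \<le> count M \<gamma>"
        using cT[of k \<gamma>] cM[of \<gamma>] k by auto
    qed
    ultimately show "r \<in> {r. 0 < r \<and> \<beta> ^ (CARD('a) ^ r) = \<beta> \<and> TT r \<beta> \<subseteq># M}" by simp
  qed
qed

lemma orbit_card:
  assumes "stable M" "\<beta> \<in># M"
  shows "card {r. 0 < r \<and> \<beta> ^ (CARD('a) ^ r) = \<beta> \<and> TT r \<beta> \<subseteq># M} = count M \<beta>"
proof -
  have "per \<beta> > 0" using per(1)[OF period_exists[OF assms]] .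
  hence "inj_on (\<lambda>k. per \<beta> * k) {1..count M \<beta>}" by (auto intro: inj_onI)
  thus ?thesis unfolding orbit_count[OF assms] by (simp add: card_image)
qed

lemma fiber_card:
  assumes "stable M" "0 \<notin># M" "size M = N"
  shows "card {(r, \<beta>). r \<in> {1..N} \<and> \<beta> \<in> ext_field r - {0} \<and> TT r \<beta> \<subseteq># M} = N"
proof -
  define R where "R = (\<lambda>\<beta>. {r. 0 < r \<and> \<beta> ^ (CARD('a) ^ r) = \<beta> \<and> TT r \<beta> \<subseteq># M})"
  have eq: "{(r, \<beta>). r \<in> {1..N} \<and> \<beta> \<in> ext_field r - {0} \<and> TT r \<beta> \<subseteq># M}
      = (\<lambda>(\<beta>, r). (r, \<beta>)) ` (SIGMA \<beta>:set_mset M. R \<beta>)"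
  proof (intro equalityI subsetI)
    fix x assume "x \<in> {(r, \<beta>). r \<in> {1..N} \<and> \<beta> \<in> ext_field r - {0} \<and> TT r \<beta> \<subseteq># M}"
    then obtain r \<beta> where x: "x = (r, \<beta>)" "r \<in> {1..N}" "\<beta> \<in> ext_field r" "TT r \<beta> \<subseteq># M" by auto
    have "\<beta> \<in># M" using beta_in_TT[of r \<beta>] x(2,4) by (auto dest: mset_subset_eqD)
    thus "x \<in> (\<lambda>(\<beta>, r). (r, \<beta>)) ` (SIGMA \<beta>:set_mset M. R \<beta>)"
      using x by (auto simp: R_def ext_field_def intro!: image_eqI[of _ _ "(\<beta>, r)"])
  next
    fix x assume "x \<in> (\<lambda>(\<beta>, r). (r, \<beta>)) ` (SIGMA \<beta>:set_mset M. R \<beta>)"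
    then obtain r \<beta> where x: "x = (r, \<beta>)" "\<beta> \<in># M" "0 < r" "\<beta> ^ (CARD('a) ^ r) = \<beta>" "TT r \<beta> \<subseteq># M"
      by (auto simp: R_def)
    have "r \<le> N" using size_mset_mono[OF x(5)] assms(3) by simp
    moreover have "\<beta> \<noteq> 0" using x(2) assms(2) by auto
    ultimately show "x \<in> {(r, \<beta>). r \<in> {1..N} \<and> \<beta> \<in> ext_field r - {0} \<and> TT r \<beta> \<subseteq># M}"
      using x by (auto simp: ext_field_def)
  qed
  have fin: "finite (R \<beta>)" if "\<beta> \<in># M" for \<beta>
    unfolding R_def orbit_count[OF assms(1) that] by simp
  have "card ((\<lambda>(\<beta>, r). (r, \<beta>)) ` (SIGMA \<beta>:set_mset M. R \<beta>)) = card (SIGMA \<beta>:set_mset M. R \<beta>)"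
    by (rule card_image) (auto intro: inj_onI)
  also have "\<dots> = (\<Sum>\<beta>\<in>set_mset M. card (R \<beta>))" using fin by (intro card_SigmaI) auto
  also have "\<dots> = (\<Sum>\<beta>\<in>set_mset M. count M \<beta>)"
    by (intro sum.cong refl) (simp add: R_def orbit_card[OF assms(1)])
  also have "\<dots> = N" using assms(3) by (simp add: size_multiset_overloaded_eq)
  finally show ?thesis using eq by simp
qed

end


context L11 begin

abbreviation (input) frb :: "'a alg_closure \<Rightarrow> 'a alg_closure" where "frb \<equiv> \<lambda>x. x ^ CARD('a)"

lemma frob0: "(0::'a alg_closure) ^ CARD('a) = 0" using q_ge2 by simp

lemma frob_neg: "(- x :: 'a alg_closure) ^ CARD('a) = - (x ^ CARD('a))"
proof -
  have "(x + - x) ^ CARD('a) = x ^ CARD('a) + (- x) ^ CARD('a)" by (rule frob_add1)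
  thus ?thesis using frob0 by (simp add: eq_neg_iff_add_eq_0 add.commute)
qed

lemma map_frob_mult: "map_poly (\<lambda>x::'a alg_closure. x ^ CARD('a)) (P * Q)
   = map_poly (\<lambda>x. x ^ CARD('a)) P * map_poly (\<lambda>x. x ^ CARD('a)) Q"
  by (rule map_poly_mult_hom) (auto simp: frob0 frob_add1 power_mult_distrib)

lemma map_frob_lin_prod:
  "map_poly (\<lambda>x::'a alg_closure. x ^ CARD('a)) (\<Prod>x\<in>#A. [:-x, 1:])
    = (\<Prod>x\<in>#image_mset (\<lambda>x. x ^ CARD('a)) A. [:-x, 1:])"
proof (induction A)
  case empty show ?case using q_ge2 by (simp add: map_poly_1)
next
  case (add x A)
  have "map_poly (\<lambda>x::'a alg_closure. x ^ CARD('a)) [:-x, 1:] = [:-(x ^ CARD('a)), 1:]"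
    using q_ge2 frob0 by (simp add: map_poly_pCons frob_neg)
  have "map_poly (\<lambda>x::'a alg_closure. x ^ CARD('a)) (\<Prod>y\<in>#add_mset x A. [:-y, 1:])
      = map_poly (\<lambda>x::'a alg_closure. x ^ CARD('a)) ([:-x, 1:] * (\<Prod>y\<in>#A. [:-y, 1:]))"
    by (simp only: image_mset_add_mset prod_mset.add_mset)
  also have "\<dots> = [:-(x ^ CARD('a)), 1:] * (\<Prod>y\<in>#image_mset (\<lambda>x. x ^ CARD('a)) A. [:-y, 1:])"
    by (simp only: map_frob_mult add.IH \<open>map_poly (\<lambda>x::'a alg_closure. x ^ CARD('a)) [:-x, 1:] = [:-(x ^ CARD('a)), 1:]\<close>)
  also have "\<dots> = (\<Prod>y\<in>#image_mset (\<lambda>x. x ^ CARD('a)) (add_mset x A). [:-y, 1:])"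
    by (simp only: image_mset_add_mset prod_mset.add_mset)
  finally show ?case .
qed

lemma map_to_ac_inj: "map_poly to_ac g1 = map_poly to_ac g2 \<Longrightarrow> g1 = (g2 :: 'a poly)"
  by (intro poly_eqI) (metis coeff_map_poly to_ac_0 to_ac_eq_iff)

lemma degree_map_to_ac [simp]: "degree (map_poly to_ac (g::'a poly)) = degree g"
  by (rule degree_map_poly) simp

lemma coeff_map_to_ac [simp]: "coeff (map_poly to_ac (g::'a poly)) i = to_ac (coeff g i)"
  by (rule coeff_map_poly) simp

lemma split_monic:
  assumes "lead_coeff (G :: 'a alg_closure poly) = 1"
  shows "G = (\<Prod>x\<in>#proots G. [:-x, 1:])" "size (proots G) = degree G"
proof -
  have "G \<noteq> 0" using assms by auto
  then obtain A where A: "size A = degree G" "G = smult (lead_coeff G) (\<Prod>x\<in>#A. [:-x, 1:])"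
    using alg_closed_imp_factorization by blast
  hence G: "G = (\<Prod>x\<in>#A. [:-x, 1:])" using assms by simp
  hence "proots G = A" using proots_lin_prod by metis
  thus "G = (\<Prod>x\<in>#proots G. [:-x, 1:])" "size (proots G) = degree G" using G A by auto
qed

definition Pol :: "nat \<Rightarrow> 'a poly set" where
  "Pol N = {g. lead_coeff g = 1 \<and> degree g = N \<and> \<not> [:0, 1:] dvd g}"

definition Stab :: "nat \<Rightarrow> 'a alg_closure multiset set" where
  "Stab N = {M. stable M \<and> 0 \<notin># M \<and> size M = N}"

definition Phi :: "'a poly \<Rightarrow> 'a alg_closure multiset" where
  "Phi g = proots (map_poly to_ac g)"

lemma lin_prod_props: "degree (\<Prod>x\<in>#A. [:-x, 1:]) = size A \<and> lead_coeff (\<Prod>x\<in>#A. [:-x, 1:]) = (1 :: 'b::idom)"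
proof (induction A)
  case (add x A)
  have nz: "(\<Prod>y\<in>#A. [:-y, 1:]) \<noteq> (0::'b poly)" using add by auto
  have e: "(\<Prod>y\<in>#add_mset x A. [:-y, 1:]) = [:-x, 1:] * (\<Prod>y\<in>#A. [:-y, 1:])"
    by (simp only: image_mset_add_mset prod_mset.add_mset)
  define P where "P = (\<Prod>y\<in>#A. [:-y, 1:])"
  have nz': "P \<noteq> 0" using nz by (simp add: P_def)
  have l0: "[:-x, 1:] \<noteq> (0::'b poly)" by simp
  have "degree ([:-x, 1:] * P) = degree [:-x, 1:] + degree P" using degree_mult_eq[OF l0 nz'] .
  hence d: "degree ([:-x, 1:] * P) = Suc (size A)" using add.IH by (simp add: P_def)
  have lx: "lead_coeff [:-x, 1:] = (1::'b)" by simp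
  have lP: "lead_coeff P = 1" unfolding P_def using add.IH by blast
  have l: "lead_coeff ([:-x, 1:] * P) = 1" by (simp only: lead_coeff_mult lx lP mult_1_left)
  show ?case unfolding e using d l by (simp add: P_def)
qed simp

lemma X_dvd_iff: "[:0, 1:] dvd (g :: 'b::comm_ring_1 poly) \<longleftrightarrow> coeff g 0 = 0"
  using dvd_iff_poly_eq_0[of 0 g] by (simp add: poly_0_coeff_0)

lemma lead_map: "lead_coeff (map_poly to_ac (g::'a poly)) = to_ac (lead_coeff g)"
  by simp

lemma Phi_Stab: assumes "g \<in> Pol N" shows "Phi g \<in> Stab N"
proof -
  let ?G = "map_poly to_ac g"
  have lcg: "lead_coeff g = 1" "degree g = N" "\<not> [:0, 1:] dvd g" using assms unfolding Pol_def by blast+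
  have lc: "lead_coeff ?G = 1" by (simp only: lead_map lcg(1) to_ac_1)
  note sp = split_monic[OF lc]
  have "map_poly (\<lambda>x. x ^ CARD('a)) ?G = ?G"
    by (intro poly_eqI) (simp add: coeff_map_poly frob0 to_ac_fixed[of _ 1, simplified])
  hence "(\<Prod>x\<in>#image_mset (\<lambda>x. x ^ CARD('a)) (Phi g). [:-x, 1:]) = (\<Prod>x\<in>#Phi g. [:-x, 1:])"
    using sp(1) map_frob_lin_prod unfolding Phi_def by metis
  hence st: "stable (Phi g)" unfolding stable_def by (metis proots_lin_prod)
  have "?G \<noteq> 0"
  proof
    assume "?G = 0" hence "lead_coeff ?G = 0" by simp
    thus False using lc by simp
  qed
  moreover have "poly ?G 0 \<noteq> 0" using lcg(3) by (simp add: X_dvd_iff poly_0_coeff_0)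
  ultimately have "0 \<notin># Phi g" by (simp add: Phi_def)
  thus ?thesis using st sp(2) lcg(2) by (simp add: Stab_def Phi_def)
qed

lemma Phi_inj: "inj_on Phi (Pol N)"
proof (rule inj_onI)
  fix g1 g2 assume g: "g1 \<in> Pol N" "g2 \<in> Pol N" "Phi g1 = Phi g2"
  have l1: "lead_coeff g1 = 1" "lead_coeff g2 = 1" using g(1,2) unfolding Pol_def by blast+
  have m1: "lead_coeff (map_poly to_ac g1) = 1" "lead_coeff (map_poly to_ac g2) = 1"
    by (simp_all only: lead_map l1 to_ac_1)
  have "map_poly to_ac g1 = (\<Prod>x\<in>#Phi g1. [:-x, 1:])"
    using split_monic(1)[OF m1(1)] unfolding Phi_def .
  also have "\<dots> = map_poly to_ac g2"
    using split_monic(1)[OF m1(2)] g(3) unfolding Phi_def by simp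
  finally show "g1 = g2" by (rule map_to_ac_inj)
qed

lemma Phi_surj: assumes "M \<in> Stab N" shows "M \<in> Phi ` Pol N"
proof -
  define P where "P = (\<Prod>x\<in>#M. [:-x, 1:])"
  have st: "image_mset (\<lambda>x. x ^ CARD('a)) M = M" using assms by (simp add: Stab_def stable_def)
  have "map_poly (\<lambda>x. x ^ CARD('a)) P = P" unfolding P_def map_frob_lin_prod st ..
  hence fixc: "coeff P i ^ CARD('a) = coeff P i" for i
    using coeff_map_poly[of "\<lambda>x. x ^ CARD('a)" P i, OF frob0] by simp
  define g where "g = map_poly of_ac P"
  have Pg: "map_poly to_ac g = P"
    unfolding g_def
    by (intro poly_eqI) (simp add: coeff_map_poly to_ac_of_ac[OF fixed_field[OF fixc]])
  have prP: "proots P = M" unfolding P_def by (rule proots_lin_prod)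
  have degP: "degree P = size M" unfolding P_def using lin_prod_props by blast
  have lcP: "lead_coeff P = 1" unfolding P_def using lin_prod_props by blast
  have "degree g = N" using Pg degP assms degree_map_to_ac[of g] by (simp add: Stab_def)
  moreover have "lead_coeff g = 1"
  proof -
    have "to_ac (lead_coeff g) = to_ac 1" using Pg lcP lead_map[of g] by simp
    thus ?thesis by (simp only: to_ac_eq_iff)
  qed
  moreover have "\<not> [:0, 1:] dvd g"
  proof
    assume "[:0, 1:] dvd g"
    hence "poly P 0 = 0" using Pg by (simp add: X_dvd_iff poly_0_coeff_0 flip: Pg)
    moreover have "P \<noteq> 0"
    proof
      assume "P = 0" hence "lead_coeff P = 0" by simp
      thus False using lcP by simp
    qed
    ultimately have "0 \<in># proots P" by simp
    thus False using prP assms by (simp add: Stab_def)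
  qed
  ultimately have "g \<in> Pol N" by (simp add: Pol_def)
  moreover have "Phi g = M" unfolding Phi_def Pg prP ..
  ultimately show ?thesis by blast
qed

lemma Phi_bij: "bij_betw Phi (Pol N) (Stab N)"
  unfolding bij_betw_def using Phi_inj Phi_Stab Phi_surj by blast

lemma finite_deg_le: "finite {g :: 'a poly. degree g \<le> N}"
proof -
  have "inj_on (\<lambda>g. map (coeff g) [0..<Suc N]) {g :: 'a poly. degree g \<le> N}"
  proof (rule inj_onI)
    fix g1 g2 :: "'a poly"
    assume "g1 \<in> {g. degree g \<le> N}" "g2 \<in> {g. degree g \<le> N}"
      "map (coeff g1) [0..<Suc N] = map (coeff g2) [0..<Suc N]"
    hence d: "degree g1 \<le> N" "degree g2 \<le> N" and m: "\<forall>i\<in>set [0..<Suc N]. coeff g1 i = coeff g2 i"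
      by (simp_all only: mem_Collect_eq map_eq_conv)
    show "g1 = g2"
    proof (rule poly_eqI)
      fix i show "coeff g1 i = coeff g2 i"
      proof (cases "i \<le> N")
        case True thus ?thesis using m by (auto simp del: upt_Suc)
      next
        case False thus ?thesis using d by (simp add: coeff_eq_0)
      qed
    qed
  qed
  moreover have "(\<lambda>g. map (coeff g) [0..<Suc N]) ` {g :: 'a poly. degree g \<le> N}
      \<subseteq> {xs. set xs \<subseteq> UNIV \<and> length xs = Suc N}" by auto
  moreover have "finite {xs. set xs \<subseteq> (UNIV :: 'a set) \<and> length xs = Suc N}"
    by (rule finite_lists_length_eq) simp
  ultimately show ?thesis using finite_subset finite_imageD by blast
qed

lemma finite_Pol: "finite (Pol N)"
  by (rule finite_subset[OF _ finite_deg_le[of N]]) (auto simp: Pol_def)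

lemma finite_Stab: "finite (Stab N)"
  using bij_betw_finite[OF Phi_bij] finite_Pol by blast

lemma chi_Phi: "g \<in> Pol N \<Longrightarrow> chi_f p n \<psi> f g = ww (Phi g)"
  by (simp add: chi_f_def Pol_def ww_def Phi_def FF_def)

lemma L_chi_coeff: "L_chi (chi_f p n \<psi> f) $ N = (\<Sum>M\<in>Stab N. ww M)"
proof -
  have "L_chi (chi_f p n \<psi> f) $ N = (\<Sum>g\<in>{g::'a poly. lead_coeff g = 1 \<and> degree g = N}. chi_f p n \<psi> f g)"
    by (simp add: L_chi_def)
  also have "\<dots> = (\<Sum>g\<in>Pol N. chi_f p n \<psi> f g)"
    by (rule sum.mono_neutral_right)
       (auto simp: Pol_def chi_f_def intro: finite_subset[OF _ finite_deg_le[of N]])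
  also have "\<dots> = (\<Sum>g\<in>Pol N. ww (Phi g))" by (rule sum.cong) (auto simp: chi_Phi)
  also have "\<dots> = (\<Sum>M\<in>Stab N. ww M)" by (rule sum.reindex_bij_betw[OF Phi_bij])
  finally show ?thesis .
qed

end


context L11 begin

lemma tr_0': "abs_trace p m (0 :: 'a alg_closure) = 0"
  using p_pos by (auto simp: abs_trace_def power_0_left intro!: sum.neutral)

lemma finite_ext: assumes "r > 0" shows "finite (ext_field r :: 'a alg_closure set)"
proof -
  define P :: "'a alg_closure poly" where "P = monom 1 (CARD('a) ^ r) + [:0,-1:]"
  have "CARD('a) \<le> CARD('a) ^ r" using assms q_ge2 by (simp add: self_le_power)
  hence ge: "CARD('a) ^ r \<ge> 2" using q_ge2 by linarith
  have degP: "degree P = CARD('a) ^ r" using ge unfolding P_def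
    by (subst degree_add_eq_left) (auto simp: degree_monom_eq)
  hence P0: "P \<noteq> 0" using ge by auto
  have "ext_field r = {x. poly P x = 0}" by (auto simp: P_def poly_monom ext_field_def)
  thus ?thesis using poly_roots_finite[OF P0] by simp
qed

lemma char_sum_eq:
  assumes "r > 0"
  shows "char_sum p n \<psi> f r = 1 + (\<Sum>\<beta>\<in>ext_field r - {0}. ww (TT r \<beta>))"
proof -
  let ?E = "ext_field r :: 'a alg_closure set"
  let ?g = "\<lambda>\<alpha>. \<psi> (abs_trace p (n * r) (poly (map_poly to_ac f) \<alpha>))"
  have fin: "finite ?E" by (rule finite_ext[OF assms])
  have z: "0 \<in> ?E" using q_ge2 by (simp add: ext_field_def)
  have "char_sum p n \<psi> f r = ?g 0 + (\<Sum>\<alpha>\<in>?E - {0}. ?g \<alpha>)"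
    unfolding char_sum_def using fin z by (simp add: sum.remove)
  also have "?g 0 = 1" by (simp add: poly_0_coeff_0 f0 tr_0' psi0)
  also have "(\<Sum>\<alpha>\<in>?E - {0}. ?g \<alpha>) = (\<Sum>\<beta>\<in>?E - {0}. ?g (inverse \<beta>))"
    by (rule sum.reindex_bij_witness[of _ inverse inverse])
       (auto simp: ext_field_def power_inverse)
  also have "\<dots> = (\<Sum>\<beta>\<in>?E - {0}. ww (TT r \<beta>))"
    by (rule sum.cong) (simp_all add: ww_TT FF_def)
  finally show ?thesis .
qed

definition cc :: "nat \<Rightarrow> complex" where "cc N = (\<Sum>M\<in>Stab N. ww M)"

lemma TT_nz: "\<beta> \<noteq> 0 \<Longrightarrow> 0 \<notin># TT r \<beta>"
  by (auto simp: TT_def)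

lemma stable_add: "stable A \<Longrightarrow> stable B \<Longrightarrow> stable (A + B)"
  by (simp add: stable_def)

lemma stable_diff: "stable A \<Longrightarrow> stable B \<Longrightarrow> B \<subseteq># A \<Longrightarrow> stable (A - B)"
  by (simp add: stable_def image_mset_Diff)

lemma recurrence:
  assumes "N > 0"
  shows "of_nat N * cc N = (\<Sum>r\<in>{1..N}. (char_sum p n \<psi> f r - 1) * cc (N - r))"
proof -
  define Trip where "Trip = (SIGMA r:{1..N}. SIGMA \<beta>:(ext_field r :: 'a alg_closure set) - {0}. Stab (N - r))"
  define h where "h = (\<lambda>(r, \<beta>, M'). TT r \<beta> + (M' :: 'a alg_closure multiset))"
  have finE: "finite (ext_field r - {0} :: 'a alg_closure set)" if "r \<in> {1..N}" for r
    using finite_ext[of r] that by auto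
  have finE': "finite (ext_field r :: 'a alg_closure set)" if "r \<in> {1..N}" for r
    using finite_ext[of r] that by auto
  have finT: "finite Trip" unfolding Trip_def
    by (intro finite_SigmaI) (auto simp: finite_Stab intro!: finite_ext)
  have hS: "h ` Trip \<subseteq> Stab N"
  proof
    fix M assume "M \<in> h ` Trip"
    then obtain y where yT: "y \<in> Trip" "M = h y" by blast
    obtain r \<beta> M' where yy: "y = (r, \<beta>, M')" by (cases y) auto
    have x: "r \<in> {1..N}" "\<beta> \<in> ext_field r" "\<beta> \<noteq> 0" "M' \<in> Stab (N - r)"
      "M = TT r \<beta> + M'" using yT unfolding yy Trip_def h_def by auto
    show "M \<in> Stab N" using x stable_TT[of \<beta> r] TT_nz[of \<beta> r]
      by (auto simp: Stab_def ext_field_def stable_add)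
  qed
  have RHS: "(\<Sum>r\<in>{1..N}. (char_sum p n \<psi> f r - 1) * cc (N - r)) = sum (ww \<circ> h) Trip"
  proof -
    have "(\<Sum>r\<in>{1..N}. (char_sum p n \<psi> f r - 1) * cc (N - r))
        = (\<Sum>r\<in>{1..N}. \<Sum>\<beta>\<in>ext_field r - {0}. \<Sum>M'\<in>Stab (N - r). ww (TT r \<beta> + M'))"
    proof (rule sum.cong[OF refl])
      fix r assume r: "r \<in> {1..N}"
      have "(char_sum p n \<psi> f r - 1) * cc (N - r)
          = (\<Sum>\<beta>\<in>ext_field r - {0}. ww (TT r \<beta>)) * (\<Sum>M'\<in>Stab (N - r). ww M')"
        using r by (simp add: char_sum_eq cc_def)
      also have "\<dots> = (\<Sum>\<beta>\<in>ext_field r - {0}. \<Sum>M'\<in>Stab (N - r). ww (TT r \<beta>) * ww M')"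
        by (simp add: sum_product)
      also have "\<dots> = (\<Sum>\<beta>\<in>ext_field r - {0}. \<Sum>M'\<in>Stab (N - r). ww (TT r \<beta> + M'))"
        by (intro sum.cong refl) (auto simp: ww_add stable_TT Stab_def ext_field_def)
      finally show "(char_sum p n \<psi> f r - 1) * cc (N - r)
          = (\<Sum>\<beta>\<in>ext_field r - {0}. \<Sum>M'\<in>Stab (N - r). ww (TT r \<beta> + M'))" .
    qed
    also have "\<dots> = (\<Sum>r\<in>{1..N}. sum (\<lambda>(\<beta>, M'). ww (TT r \<beta> + M')) (SIGMA \<beta>:ext_field r - {0}. Stab (N - r)))"
      by (rule sum.cong[OF refl], rule sum.Sigma) (auto simp: finite_Stab intro!: finite_ext)
    also have "\<dots> = sum (\<lambda>(r, x). (\<lambda>(\<beta>, M'). ww (TT r \<beta> + M')) x) Trip"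
      unfolding Trip_def
      by (rule sum.Sigma) (auto simp: finite_Stab intro!: finite_SigmaI finite_ext)
    also have "\<dots> = sum (ww \<circ> h) Trip"
      by (rule sum.cong[OF refl]) (auto simp: h_def)
    finally show ?thesis .
  qed
  have "sum (ww \<circ> h) Trip = (\<Sum>M\<in>Stab N. sum (ww \<circ> h) {x \<in> Trip. h x = M})"
    by (rule sum.group[symmetric]) (use finT finite_Stab hS in auto)
  also have "\<dots> = (\<Sum>M\<in>Stab N. ww M * of_nat (card {x \<in> Trip. h x = M}))"
    by (intro sum.cong refl) (simp add: o_def)
  also have "\<dots> = (\<Sum>M\<in>Stab N. ww M * of_nat N)"
  proof (rule sum.cong[OF refl])
    fix M assume M: "M \<in> Stab N"
    have st: "stable M" "0 \<notin># M" "size M = N" using M by (auto simp: Stab_def)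
    have "card {x \<in> Trip. h x = M} = card {(r, \<beta>). r \<in> {1..N} \<and> \<beta> \<in> ext_field r - {0} \<and> TT r \<beta> \<subseteq># M}"
    proof (rule bij_betw_same_card[of "\<lambda>(r, \<beta>, M'). (r, \<beta>)" _ _])
      show "bij_betw (\<lambda>(r, \<beta>, M'). (r, \<beta>)) {x \<in> Trip. h x = M}
          {(r, \<beta>). r \<in> {1..N} \<and> \<beta> \<in> ext_field r - {0} \<and> TT r \<beta> \<subseteq># M}"
      proof (rule bij_betw_byWitness[of _ "\<lambda>(r, \<beta>). (r, \<beta>, M - TT r \<beta>)"])
        show "\<forall>x\<in>{x \<in> Trip. h x = M}. (\<lambda>(r, \<beta>). (r, \<beta>, M - TT r \<beta>)) ((\<lambda>(r, \<beta>, M'). (r, \<beta>)) x) = x"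
          by (auto simp: h_def)
        show "\<forall>y\<in>{(r, \<beta>). r \<in> {1..N} \<and> \<beta> \<in> ext_field r - {0} \<and> TT r \<beta> \<subseteq># M}.
            (\<lambda>(r, \<beta>, M'). (r, \<beta>)) ((\<lambda>(r, \<beta>). (r, \<beta>, M - TT r \<beta>)) y) = y" by auto
        show "(\<lambda>(r, \<beta>, M'). (r, \<beta>)) ` {x \<in> Trip. h x = M}
            \<subseteq> {(r, \<beta>). r \<in> {1..N} \<and> \<beta> \<in> ext_field r - {0} \<and> TT r \<beta> \<subseteq># M}"
          by (auto simp: Trip_def h_def)
        show "(\<lambda>(r, \<beta>). (r, \<beta>, M - TT r \<beta>)) ` {(r, \<beta>). r \<in> {1..N} \<and> \<beta> \<in> ext_field r - {0} \<and> TT r \<beta> \<subseteq># M}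
            \<subseteq> {x \<in> Trip. h x = M}"
        proof
          fix y assume "y \<in> (\<lambda>(r, \<beta>). (r, \<beta>, M - TT r \<beta>)) ` {(r, \<beta>). r \<in> {1..N} \<and> \<beta> \<in> ext_field r - {0} \<and> TT r \<beta> \<subseteq># M}"
          then obtain r \<beta> where x: "r \<in> {1..N}" "\<beta> \<in> ext_field r" "\<beta> \<noteq> 0" "TT r \<beta> \<subseteq># M"
            and y: "y = (r, \<beta>, M - TT r \<beta>)" by auto
          have "stable (M - TT r \<beta>)"
            using stable_diff[OF st(1) stable_TT x(4)] x(2) by (simp add: ext_field_def)
          moreover have "0 \<notin># M - TT r \<beta>" using st(2) by (meson in_diffD)
          moreover have "size (M - TT r \<beta>) = N - r" using size_Diff_submset[OF x(4)] st(3) by simp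
          ultimately have "M - TT r \<beta> \<in> Stab (N - r)" by (simp add: Stab_def)
          thus "y \<in> {x \<in> Trip. h x = M}"
            using x unfolding y by (auto simp: Trip_def h_def subset_mset.add_diff_inverse)
        qed
      qed
    qed
    also have "\<dots> = N" by (rule fiber_card[OF st])
    finally show "ww M * of_nat (card {x \<in> Trip. h x = M}) = ww M * of_nat N" by simp
  qed
  also have "\<dots> = of_nat N * cc N" by (simp add: cc_def sum_distrib_left mult.commute)
  finally show ?thesis using RHS by simp
qed

end



lemma fps_ode_unique:
  fixes U V D :: "complex fps"
  assumes "U $ 0 = V $ 0" "fps_deriv U = U * D" "fps_deriv V = V * D"
  shows "U = V"
proof -
  have "U $ N = V $ N" for N
  proof (induction N rule: less_induct)
    case (less N)
    show ?case
    proof (cases N)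
      case 0 thus ?thesis using assms(1) by simp
    next
      case (Suc m)
      have "of_nat (Suc m) * U $ Suc m = (U * D) $ m"
        using arg_cong[OF assms(2), of "\<lambda>F. F $ m"] by (simp add: fps_deriv_nth)
      also have "\<dots> = (V * D) $ m"
        unfolding fps_mult_nth using less Suc by (intro sum.cong refl) auto
      also have "\<dots> = of_nat (Suc m) * V $ Suc m"
        using arg_cong[OF assms(3), of "\<lambda>F. F $ m"] by (simp add: fps_deriv_nth)
      finally show ?thesis using Suc by (simp del: of_nat_Suc)
    qed
  qed
  thus ?thesis by (simp add: fps_ext)
qed

context L11 begin

lemma cc0: "cc 0 = 1"
proof -
  have "Stab 0 = {{#}}" by (auto simp: Stab_def stable_def)
  thus ?thesis by (simp add: cc_def ww_empty)
qed

definition DD :: "complex fps" where "DD = Abs_fps (\<lambda>k. char_sum p n \<psi> f (Suc k) - 1)"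

lemma C_ode: "fps_deriv (L_chi (chi_f p n \<psi> f)) = L_chi (chi_f p n \<psi> f) * DD"
proof (rule fps_ext)
  fix m
  have "fps_deriv (L_chi (chi_f p n \<psi> f)) $ m = of_nat (Suc m) * cc (Suc m)"
    by (simp add: fps_deriv_nth L_chi_coeff cc_def)
  also have "\<dots> = (\<Sum>r\<in>{1..Suc m}. (char_sum p n \<psi> f r - 1) * cc (Suc m - r))"
    by (rule recurrence) simp
  also have "\<dots> = (\<Sum>i = 0..m. cc i * (char_sum p n \<psi> f (Suc (m - i)) - 1))"
    by (rule sum.reindex_bij_witness[of _ "\<lambda>i. Suc m - i" "\<lambda>r. Suc m - r"])
       (auto simp: Suc_diff_le)
  also have "\<dots> = (L_chi (chi_f p n \<psi> f) * DD) $ m"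
    by (simp add: fps_mult_nth L_chi_coeff cc_def DD_def)
  finally show "fps_deriv (L_chi (chi_f p n \<psi> f)) $ m = (L_chi (chi_f p n \<psi> f) * DD) $ m" .
qed

definition AA :: "complex fps" where
  "AA = Abs_fps (\<lambda>r. if r = 0 then 0 else char_sum p n \<psi> f r / of_nat r)"

lemma L_eq: "L_f_psi p n \<psi> f = fps_exp 1 oo AA"
  by (simp add: L_f_psi_def AA_def)

lemma AA_deriv: "fps_deriv AA = DD + Abs_fps (\<lambda>_. 1)"
  by (rule fps_ext) (simp add: fps_deriv_nth AA_def DD_def del: of_nat_Suc)

lemma geom: "(1 - fps_X) * Abs_fps (\<lambda>_. 1 :: complex) = 1"
  by (rule fps_ext) (simp add: algebra_simps fps_X_mult_nth)

lemma V_ode: "fps_deriv ((1 - fps_X) * L_f_psi p n \<psi> f) = ((1 - fps_X) * L_f_psi p n \<psi> f) * DD"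
proof -
  let ?L = "fps_exp 1 oo AA"
  have A0: "AA $ 0 = 0" by (simp add: AA_def)
  have dL: "fps_deriv ?L = ?L * fps_deriv AA"
    by (simp add: fps_compose_deriv[OF A0] fps_exp_deriv)
  have "fps_deriv ((1 - fps_X) * ?L) = - ?L + (1 - fps_X) * (?L * (DD + Abs_fps (\<lambda>_. 1)))"
    by (simp add: fps_deriv_mult dL AA_deriv)
  also have "\<dots> = - ?L + (1 - fps_X) * ?L * DD + ?L * ((1 - fps_X) * Abs_fps (\<lambda>_. 1))"
    by (simp add: algebra_simps)
  also have "\<dots> = (1 - fps_X) * ?L * DD" by (simp add: geom)
  finally show ?thesis by (simp add: L_eq)
qed

theorem main: "L_chi (chi_f p n \<psi> f) = (1 - fps_X) * L_f_psi p n \<psi> f"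
proof (rule fps_ode_unique[OF _ C_ode V_ode])
  have "L_chi (chi_f p n \<psi> f) $ 0 = 1" by (simp add: L_chi_coeff cc0 flip: cc_def)
  moreover have "((1 - fps_X) * L_f_psi p n \<psi> f) $ 0 = 1"
    by (simp add: L_eq fps_compose_nth_0)
  ultimately show "L_chi (chi_f p n \<psi> f) $ 0 = ((1 - fps_X) * L_f_psi p n \<psi> f) $ 0" by simp
qed

end

theorem lemma11:
  fixes p n d :: nat
    and \<psi> :: "'a::{field,finite} alg_closure \<Rightarrow> complex"
    and f :: "'a poly"
  assumes "prime p"
    and "CARD('a) = p ^ n"
    and "coprime d p"
    and "nontriv_add_char p \<psi>"
    and "f \<in> calF p d"
  shows "L_chi (chi_f p n \<psi> f) = (1 - fps_X) * L_f_psi p n \<psi> f"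
proof -
  have "coeff f 0 = 0" using assms(5) by (simp add: calF_def)
  then interpret L11 p n \<psi> f using assms(1,2,4) by unfold_locales
  show ?thesis by (rule main)
qed

end
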